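(* Let $\phi:\mathscr{M}[\underline x]\to\mathbb{R}$ be a homomorphism of $\mathbb{R}$-algebras. The following are equivalent: (i) $\phi(\mathtt{m}(f^2))\ge0$ for all $f\in\mathscr{M}[\underline x]$; (ii) $\phi(\mathtt{m}(p^2))\ge0$ for all $p\in\mathbb{R}[\underline x]$; (iii) the real matrix $(\phi(\mathtt{m}(uv)))_{u,v\in[\underline x]_d}$ is positive semidefinite for all $d\in\mathbb{N}$.
   Context: Let $\mathbb{R}[\underline x]=\mathbb{R}[x_1,\dots,x_n]$, $\mathscr{M}=\mathbb{R}[\mathtt{m}_{i_1,\dots,i_n}\colon (i_1,\dots,i_n)\in\mathbb{N}_0^n]$ the polynomial ring in countably many indeterminates with $\mathtt{m}_{0,\dots,0}:=1$, $\mathscr{M}[\underline x]=\mathscr{M}\otimes_{\mathbb{R}}\mathbb{R}[\underline x]$, and $\mathtt{m}:\mathscr{M}[\underline x]\to\mathscr{M}$ the unique $\mathscr{M}$-linear map with $\mathtt{m}(x_1^{i_1}\cdots x_n^{i_n})=\mathtt{m}_{i_1,\dots,i_n}$. $[\underline x]_d$ denotes the set of monomials in $x_1,\dots,x_n$ of degree at most $d$. *)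

theory Defs
  imports Complex_Main "HOL-Library.Poly_Mapping"
begin

text \<open>Monomials in the variables x_i, i ranging over a finite type 'n
  (so n = CARD of that type), are finitely supported exponent vectors.
  R[x] is the ring of finitely supported coefficient maps on monomials.\<close>

type_synonym 'n monom = "'n \<Rightarrow>\<^sub>0 nat"
type_synonym 'n rpoly = "'n monom \<Rightarrow>\<^sub>0 real"

text \<open>Nonzero multi-indices: these index the indeterminates m_alpha of the
  ring M (the indeterminate m_0 is identified with 1).\<close>
typedef 'n nzidx = "{\<alpha> :: 'n monom. \<alpha> \<noteq> 0}"
proof -
  have "Poly_Mapping.keys (Poly_Mapping.single undefined (1::nat)) \<noteq> Poly_Mapping.keys (0 :: 'n \<Rightarrow>\<^sub>0 nat)"
    by simp
  then have "Poly_Mapping.single undefined (1::nat) \<noteq> (0 :: 'n \<Rightarrow>\<^sub>0 nat)" by metis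
  then show ?thesis by blast
qed

text \<open>M = R[m_alpha : alpha nonzero]; M[x] = polynomials in x with coefficients in M.\<close>
type_synonym 'n Mring = "('n nzidx \<Rightarrow>\<^sub>0 nat) \<Rightarrow>\<^sub>0 real"
type_synonym 'n Mxring = "'n monom \<Rightarrow>\<^sub>0 'n Mring"

definition mvar :: "'n monom \<Rightarrow> 'n Mring" where
  "mvar \<alpha> = (if \<alpha> = 0 then 1
              else Poly_Mapping.single (Poly_Mapping.single (Abs_nzidx \<alpha>) 1) 1)"

definition mmap :: "'n Mxring \<Rightarrow> 'n Mring" where
  "mmap f = (\<Sum>\<alpha>\<in>Poly_Mapping.keys f. Poly_Mapping.lookup f \<alpha> * mvar \<alpha>)"

definition constM :: "real \<Rightarrow> 'n Mring" where
  "constM c = Poly_Mapping.single 0 c"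

definition constMx :: "'n Mring \<Rightarrow> 'n Mxring" where
  "constMx a = Poly_Mapping.single 0 a"

definition embR :: "'n rpoly \<Rightarrow> 'n Mxring" where
  "embR p = Poly_Mapping.map constM p"

definition xmon :: "'n monom \<Rightarrow> 'n Mxring" where
  "xmon \<alpha> = Poly_Mapping.single \<alpha> 1"

definition mdeg :: "('n::finite) monom \<Rightarrow> nat" where
  "mdeg \<alpha> = (\<Sum>i\<in>UNIV. Poly_Mapping.lookup \<alpha> i)"

definition monoms_upto :: "nat \<Rightarrow> ('n::finite) monom set" where
  "monoms_upto d = {\<alpha>. mdeg \<alpha> \<le> d}"

definition R_alg_hom :: "('n Mxring \<Rightarrow> real) \<Rightarrow> bool" where
  "R_alg_hom \<phi> \<longleftrightarrow>
     (\<forall>f g. \<phi> (f + g) = \<phi> f + \<phi> g) \<and>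
     (\<forall>f g. \<phi> (f * g) = \<phi> f * \<phi> g) \<and>
     (\<forall>c. \<phi> (constMx (constM c)) = c)"

definition psd_on :: "'a set \<Rightarrow> ('a \<Rightarrow> 'a \<Rightarrow> real) \<Rightarrow> bool" where
  "psd_on S M \<longleftrightarrow> (\<forall>u\<in>S. \<forall>v\<in>S. M u v = M v u) \<and>
     (\<forall>c :: 'a \<Rightarrow> real. (\<Sum>u\<in>S. \<Sum>v\<in>S. c u * M u v * c v) \<ge> 0)"

end

theory Submission
  imports Defs
begin

lemma hom_add: "R_alg_hom \<phi> \<Longrightarrow> \<phi> (f + g) = \<phi> f + \<phi> g"
  by (simp add: R_alg_hom_def)
lemma hom_mult: "R_alg_hom \<phi> \<Longrightarrow> \<phi> (f * g) = \<phi> f * \<phi> g"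
  by (simp add: R_alg_hom_def)
lemma hom_const: "R_alg_hom \<phi> \<Longrightarrow> \<phi> (constMx (constM c)) = c"
  by (simp add: R_alg_hom_def)
lemma hom_zero: "R_alg_hom \<phi> \<Longrightarrow> \<phi> 0 = 0"
  using hom_add[of \<phi> 0 0] by simp
lemma hom_sum: "R_alg_hom \<phi> \<Longrightarrow> \<phi> (sum g A) = (\<Sum>a\<in>A. \<phi> (g a))"
  by (induction A rule: infinite_finite_induct) (auto simp: hom_zero hom_add)

lemma constMx_add: "constMx (a + b) = constMx a + constMx b"
  by (simp add: constMx_def single_add)
lemma constMx_mult: "constMx (a * b) = constMx a * constMx b"
  by (simp add: constMx_def mult_single)
lemma constMx_zero: "constMx 0 = 0"
  by (simp add: constMx_def)
lemma constMx_sum: "constMx (sum g A) = (\<Sum>a\<in>A. constMx (g a))"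
  by (induction A rule: infinite_finite_induct) (auto simp: constMx_zero constMx_add)

definition psi :: "('n Mxring \<Rightarrow> real) \<Rightarrow> 'n Mring \<Rightarrow> real" where
  "psi \<phi> a = \<phi> (constMx a)"

lemma psi_add: "R_alg_hom \<phi> \<Longrightarrow> psi \<phi> (a + b) = psi \<phi> a + psi \<phi> b"
  by (simp add: psi_def constMx_add hom_add)
lemma psi_mult: "R_alg_hom \<phi> \<Longrightarrow> psi \<phi> (a * b) = psi \<phi> a * psi \<phi> b"
  by (simp add: psi_def constMx_mult hom_mult)
lemma psi_sum: "R_alg_hom \<phi> \<Longrightarrow> psi \<phi> (sum g A) = (\<Sum>a\<in>A. psi \<phi> (g a))"
  by (simp add: psi_def constMx_sum hom_sum)
lemma psi_constM: "R_alg_hom \<phi> \<Longrightarrow> psi \<phi> (constM c) = c"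
  by (simp add: psi_def hom_const)

lemma mmap_alt:
  assumes "finite S" "Poly_Mapping.keys f \<subseteq> S"
  shows "mmap f = (\<Sum>\<alpha>\<in>S. Poly_Mapping.lookup f \<alpha> * mvar \<alpha>)"
  unfolding mmap_def
  by (rule sum.mono_neutral_left) (use assms in \<open>auto simp: in_keys_iff\<close>)

lemma mmap_add: "mmap (f + g) = mmap f + mmap g"
proof -
  let ?S = "Poly_Mapping.keys f \<union> Poly_Mapping.keys g \<union> Poly_Mapping.keys (f + g)"
  have fin: "finite ?S" by simp
  have "mmap (f + g) = (\<Sum>\<alpha>\<in>?S. Poly_Mapping.lookup (f + g) \<alpha> * mvar \<alpha>)"
    by (rule mmap_alt[OF fin]) auto
  also have "\<dots> = (\<Sum>\<alpha>\<in>?S. Poly_Mapping.lookup f \<alpha> * mvar \<alpha>) + (\<Sum>\<alpha>\<in>?S. Poly_Mapping.lookup g \<alpha> * mvar \<alpha>)"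
    by (simp add: lookup_add distrib_right sum.distrib)
  also have "\<dots> = mmap f + mmap g"
  proof -
    have "mmap f = (\<Sum>\<alpha>\<in>?S. Poly_Mapping.lookup f \<alpha> * mvar \<alpha>)"
      by (rule mmap_alt[OF fin]) auto
    moreover have "mmap g = (\<Sum>\<alpha>\<in>?S. Poly_Mapping.lookup g \<alpha> * mvar \<alpha>)"
      by (rule mmap_alt[OF fin]) auto
    ultimately show ?thesis by simp
  qed
  finally show ?thesis .
qed

lemma mmap_zero: "mmap 0 = 0"
  by (simp add: mmap_def)

lemma mmap_sum: "mmap (sum g A) = (\<Sum>a\<in>A. mmap (g a))"
  by (induction A rule: infinite_finite_induct) (auto simp: mmap_zero mmap_add)

lemma mmap_single: "mmap (Poly_Mapping.single \<gamma> b) = b * mvar \<gamma>"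
  by (simp add: mmap_def)

lemma lookup_sum_single:
  assumes "finite S"
  shows "Poly_Mapping.lookup (\<Sum>\<alpha>\<in>S. Poly_Mapping.single \<alpha> (c \<alpha>)) k = (if k \<in> S then c k else 0)"
  using assms by (simp add: lookup_sum lookup_single when_def)

lemma expand:
  assumes "finite S" "Poly_Mapping.keys f \<subseteq> S"
  shows "f = (\<Sum>\<alpha>\<in>S. Poly_Mapping.single \<alpha> (Poly_Mapping.lookup f \<alpha>))"
  by (rule poly_mapping_eqI) (use assms in \<open>auto simp: lookup_sum_single in_keys_iff\<close>)

lemma key:
  assumes hom: "R_alg_hom \<phi>" and fin: "finite S"
  shows "\<phi> (constMx (mmap ((\<Sum>\<alpha>\<in>S. Poly_Mapping.single \<alpha> (a \<alpha>)) ^ 2)))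
     = (\<Sum>\<alpha>\<in>S. \<Sum>\<beta>\<in>S. psi \<phi> (a \<alpha>) * psi \<phi> (a \<beta>) * psi \<phi> (mvar (\<alpha> + \<beta>)))"
proof -
  have "(\<Sum>\<alpha>\<in>S. Poly_Mapping.single \<alpha> (a \<alpha>)) ^ 2
     = (\<Sum>\<alpha>\<in>S. \<Sum>\<beta>\<in>S. Poly_Mapping.single (\<alpha> + \<beta>) (a \<alpha> * a \<beta>))"
    by (simp add: power2_eq_square sum_product mult_single)
  then have "mmap ((\<Sum>\<alpha>\<in>S. Poly_Mapping.single \<alpha> (a \<alpha>)) ^ 2)
     = (\<Sum>\<alpha>\<in>S. \<Sum>\<beta>\<in>S. a \<alpha> * a \<beta> * mvar (\<alpha> + \<beta>))"
    by (simp add: mmap_sum mmap_single)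
  then show ?thesis
    using hom by (simp add: psi_def[symmetric] psi_sum psi_mult)
qed

lemma lookup_embR: "Poly_Mapping.lookup (embR p) k = constM (Poly_Mapping.lookup p k)"
  by (simp add: embR_def map.rep_eq when_def constM_def)

lemma expand_embR:
  assumes "finite S" "Poly_Mapping.keys p \<subseteq> S"
  shows "embR p = (\<Sum>\<alpha>\<in>S. Poly_Mapping.single \<alpha> (constM (Poly_Mapping.lookup p \<alpha>)))"
proof -
  have "Poly_Mapping.keys (embR p) \<subseteq> S"
    using assms(2) by (auto simp: in_keys_iff lookup_embR constM_def) (metis in_keys_iff single_zero subsetD)
  from expand[OF assms(1) this] show ?thesis by (simp add: lookup_embR)
qed

lemma finite_monoms_upto: "finite (monoms_upto d :: ('n::finite) monom set)"
proof -
  have "Poly_Mapping.lookup ` (monoms_upto d :: 'n monom set) \<subseteq>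
      {f. \<forall>x. (x \<in> UNIV \<longrightarrow> f x \<in> {..d}) \<and> (x \<notin> UNIV \<longrightarrow> f x = 0)}"
  proof (rule image_subsetI)
    fix \<alpha> :: "'n monom" assume "\<alpha> \<in> monoms_upto d"
    then have "mdeg \<alpha> \<le> d" by (simp add: monoms_upto_def)
    moreover have "Poly_Mapping.lookup \<alpha> x \<le> mdeg \<alpha>" for x
      unfolding mdeg_def by (rule member_le_sum) auto
    ultimately have "\<forall>x. Poly_Mapping.lookup \<alpha> x \<le> d" using le_trans by blast
    then show "Poly_Mapping.lookup \<alpha> \<in> {f. \<forall>x. (x \<in> UNIV \<longrightarrow> f x \<in> {..d}) \<and> (x \<notin> UNIV \<longrightarrow> f x = 0)}"
      by simp
  qed
  moreover have "finite {f. \<forall>x. (x \<in> (UNIV::'n set) \<longrightarrow> f x \<in> {..d}) \<and> (x \<notin> UNIV \<longrightarrow> f x = (0::nat))}"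
    by (rule finite_set_of_finite_funs) auto
  ultimately have "finite (Poly_Mapping.lookup ` (monoms_upto d :: 'n monom set))"
    by (rule finite_subset)
  then show ?thesis
    by (rule finite_imageD) (simp add: inj_on_def poly_mapping.lookup_inject)
qed

theorem lemma3p1:
  fixes \<phi> :: "('n::finite) Mxring \<Rightarrow> real"
  assumes "R_alg_hom \<phi>"
  shows "((\<forall>f :: 'n Mxring. \<phi> (constMx (mmap (f ^ 2))) \<ge> 0)
          \<longleftrightarrow> (\<forall>p :: 'n rpoly. \<phi> (constMx (mmap (embR p ^ 2))) \<ge> 0))
       \<and> ((\<forall>p :: 'n rpoly. \<phi> (constMx (mmap (embR p ^ 2))) \<ge> 0)
          \<longleftrightarrow> (\<forall>d::nat. d \<ge> 1 \<longrightarrow>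
                 psd_on (monoms_upto d)
                   (\<lambda>u v. \<phi> (constMx (mmap (xmon u * xmon v))))))"
proof -
  note hom = assms
  have QE: "\<phi> (constMx (mmap (embR p ^ 2))) = (\<Sum>\<alpha>\<in>S. \<Sum>\<beta>\<in>S.
      Poly_Mapping.lookup p \<alpha> * Poly_Mapping.lookup p \<beta> * psi \<phi> (mvar (\<alpha> + \<beta>)))"
    if "finite S" "Poly_Mapping.keys p \<subseteq> S" for S and p :: "'n rpoly"
    using key[OF hom that(1), of "\<lambda>\<alpha>. constM (Poly_Mapping.lookup p \<alpha>)"]
      expand_embR[OF that] by (simp add: psi_constM[OF hom])
  have entry: "\<phi> (constMx (mmap (xmon u * xmon v))) = psi \<phi> (mvar (u + v))" for u v :: "'n monom"
    by (simp add: xmon_def mult_single mmap_single psi_def)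
  have keys_sum: "Poly_Mapping.keys (\<Sum>\<alpha>\<in>S. Poly_Mapping.single \<alpha> (c \<alpha>)) \<subseteq> S"
    if "finite S" for S and c :: "'n monom \<Rightarrow> real"
    using that by (auto simp: in_keys_iff lookup_sum_single split: if_splits)
  have A: "(\<forall>f :: 'n Mxring. \<phi> (constMx (mmap (f ^ 2))) \<ge> 0)
          \<longleftrightarrow> (\<forall>p :: 'n rpoly. \<phi> (constMx (mmap (embR p ^ 2))) \<ge> 0)"
  proof
    assume "\<forall>f :: 'n Mxring. \<phi> (constMx (mmap (f ^ 2))) \<ge> 0"
    then show "\<forall>p :: 'n rpoly. \<phi> (constMx (mmap (embR p ^ 2))) \<ge> 0" by blast
  next
    assume H: "\<forall>p :: 'n rpoly. \<phi> (constMx (mmap (embR p ^ 2))) \<ge> 0"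
    show "\<forall>f :: 'n Mxring. \<phi> (constMx (mmap (f ^ 2))) \<ge> 0"
    proof
      fix f :: "'n Mxring"
      define S where "S = Poly_Mapping.keys f"
      have fin: "finite S" by (simp add: S_def)
      define p :: "'n rpoly" where "p = (\<Sum>\<alpha>\<in>S. Poly_Mapping.single \<alpha> (psi \<phi> (Poly_Mapping.lookup f \<alpha>)))"
      have lp: "Poly_Mapping.lookup p \<alpha> = psi \<phi> (Poly_Mapping.lookup f \<alpha>)" if "\<alpha> \<in> S" for \<alpha>
        using that fin by (simp add: p_def lookup_sum_single)
      have "\<phi> (constMx (mmap (embR p ^ 2))) = (\<Sum>\<alpha>\<in>S. \<Sum>\<beta>\<in>S.
          Poly_Mapping.lookup p \<alpha> * Poly_Mapping.lookup p \<beta> * psi \<phi> (mvar (\<alpha> + \<beta>)))"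
        by (rule QE[OF fin]) (simp add: p_def keys_sum[OF fin])
      also have "\<dots> = (\<Sum>\<alpha>\<in>S. \<Sum>\<beta>\<in>S. psi \<phi> (Poly_Mapping.lookup f \<alpha>) *
           psi \<phi> (Poly_Mapping.lookup f \<beta>) * psi \<phi> (mvar (\<alpha> + \<beta>)))"
        by (intro sum.cong refl) (simp add: lp)
      also have "\<dots> = \<phi> (constMx (mmap (f ^ 2)))"
        using key[OF hom fin, of "Poly_Mapping.lookup f"] expand[OF fin, of f]
        by (simp add: S_def)
      finally show "\<phi> (constMx (mmap (f ^ 2))) \<ge> 0" using H by metis
    qed
  qed
  have B: "(\<forall>p :: 'n rpoly. \<phi> (constMx (mmap (embR p ^ 2))) \<ge> 0)
          \<longleftrightarrow> (\<forall>d::nat. d \<ge> 1 \<longrightarrow>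
                 psd_on (monoms_upto d)
                   (\<lambda>u v. \<phi> (constMx (mmap (xmon u * xmon v)))))"
  proof
    assume H: "\<forall>p :: 'n rpoly. \<phi> (constMx (mmap (embR p ^ 2))) \<ge> 0"
    show "\<forall>d::nat. d \<ge> 1 \<longrightarrow> psd_on (monoms_upto d)
                   (\<lambda>u v. \<phi> (constMx (mmap (xmon u * xmon v))))"
    proof (intro allI impI)
      fix d :: nat
      define S :: "'n monom set" where "S = monoms_upto d"
      have fin: "finite S" by (simp add: S_def finite_monoms_upto)
      have "(\<Sum>u\<in>S. \<Sum>v\<in>S. c u * \<phi> (constMx (mmap (xmon u * xmon v))) * c v) \<ge> 0"
        for c :: "'n monom \<Rightarrow> real"
      proof -
        define p :: "'n rpoly" where "p = (\<Sum>\<alpha>\<in>S. Poly_Mapping.single \<alpha> (c \<alpha>))"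
        have lp: "Poly_Mapping.lookup p \<alpha> = c \<alpha>" if "\<alpha> \<in> S" for \<alpha>
          using that fin by (simp add: p_def lookup_sum_single)
        have "\<phi> (constMx (mmap (embR p ^ 2))) = (\<Sum>\<alpha>\<in>S. \<Sum>\<beta>\<in>S.
            Poly_Mapping.lookup p \<alpha> * Poly_Mapping.lookup p \<beta> * psi \<phi> (mvar (\<alpha> + \<beta>)))"
          by (rule QE[OF fin]) (simp add: p_def keys_sum[OF fin])
        also have "\<dots> = (\<Sum>u\<in>S. \<Sum>v\<in>S. c u * \<phi> (constMx (mmap (xmon u * xmon v))) * c v)"
          by (intro sum.cong refl) (simp add: lp entry)
        finally show ?thesis using H by metis
      qed
      moreover have "\<phi> (constMx (mmap (xmon u * xmon v))) = \<phi> (constMx (mmap (xmon v * xmon u)))" for u v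
        by (simp add: mult.commute)
      ultimately show "psd_on (monoms_upto d) (\<lambda>u v. \<phi> (constMx (mmap (xmon u * xmon v))))"
        by (simp add: psd_on_def S_def)
    qed
  next
    assume H: "\<forall>d::nat. d \<ge> 1 \<longrightarrow> psd_on (monoms_upto d)
                   (\<lambda>u v. \<phi> (constMx (mmap (xmon u * xmon v))))"
    show "\<forall>p :: 'n rpoly. \<phi> (constMx (mmap (embR p ^ 2))) \<ge> 0"
    proof
      fix p :: "'n rpoly"
      define d where "d = Suc (Max (mdeg ` Poly_Mapping.keys p))"
      define S :: "'n monom set" where "S = monoms_upto d"
      have fin: "finite S" by (simp add: S_def finite_monoms_upto)
      have sub: "Poly_Mapping.keys p \<subseteq> S"
      proof
        fix \<alpha> assume "\<alpha> \<in> Poly_Mapping.keys p"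
        then have "mdeg \<alpha> \<le> Max (mdeg ` Poly_Mapping.keys p)" by (intro Max_ge) auto
        then show "\<alpha> \<in> S" by (simp add: S_def d_def monoms_upto_def)
      qed
      have "psd_on S (\<lambda>u v. \<phi> (constMx (mmap (xmon u * xmon v))))"
        using H by (simp add: S_def d_def)
      then have "(\<Sum>u\<in>S. \<Sum>v\<in>S. Poly_Mapping.lookup p u * \<phi> (constMx (mmap (xmon u * xmon v)))
           * Poly_Mapping.lookup p v) \<ge> 0"
        unfolding psd_on_def by blast
      also have "(\<Sum>u\<in>S. \<Sum>v\<in>S. Poly_Mapping.lookup p u * \<phi> (constMx (mmap (xmon u * xmon v)))
           * Poly_Mapping.lookup p v) = \<phi> (constMx (mmap (embR p ^ 2)))"
        unfolding QE[OF fin sub] by (intro sum.cong refl) (simp add: entry)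
      finally show "\<phi> (constMx (mmap (embR p ^ 2))) \<ge> 0" .
    qed
  qed
  from A B show ?thesis by blast
qed

end
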